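(* For every $n>3$, let $G_n$ be the directed graph with nodes $0,\dots,n-1$ and arcs $i\to i+1$ for $0\le i\le n-2$, $j\to 0$ for $1\le j\le n-1$, and $0\to n-1$. Then $G_n$ is strongly connected and $R(G_n)=1/3$.
   Context: $d_G(x,y)$ is the shortest directed path length from $x$ to $y$ ($\infty$ if none). The distance-count matrix $C_G\in\mathbb{R}^{n\times n}$ has $(C_G)_{i,k}=|\{j: d_G(j,i)=k\}|$. For $\mathbf a\in\mathbb{R}^{\mathbb{N}}$ (with $a_0$ arbitrary) the linear centrality is $f^{\mathbf a}_G(i)=\sum_{k=0}^{n-1}(C_G)_{i,k}a_k$. A permutation $\pi$ of $\{0,\dots,n-1\}$ is representable by $G$ if there is $\mathbf a$ with $f^{\mathbf a}_G(\pi(0))>\dots>f^{\mathbf a}_G(\pi(n-1))$. $R(G)=|\{\pi\in S_n:\pi\text{ representable by }G\}|/n!$. *)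

theory Defs
  imports Complex_Main "HOL-Library.Extended_Nat" "HOL-Combinatorics.Permutations"
begin

text \<open>A directed graph on the nodes 0,...,n-1 is given by the number of nodes n and an
arc relation E (only arcs between nodes below n are relevant).\<close>

definition walk :: "nat \<Rightarrow> (nat \<Rightarrow> nat \<Rightarrow> bool) \<Rightarrow> nat \<Rightarrow> nat \<Rightarrow> nat \<Rightarrow> bool" where
  "walk n E x y k \<longleftrightarrow> (\<exists>p::nat \<Rightarrow> nat. p 0 = x \<and> p k = y \<and> (\<forall>i\<le>k. p i < n)
      \<and> (\<forall>i<k. E (p i) (p (Suc i))))"

definition gdist :: "nat \<Rightarrow> (nat \<Rightarrow> nat \<Rightarrow> bool) \<Rightarrow> nat \<Rightarrow> nat \<Rightarrow> enat" where
  "gdist n E x y = (if \<exists>k. walk n E x y k then enat (LEAST k. walk n E x y k) else \<infinity>)"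

definition strongly_connected :: "nat \<Rightarrow> (nat \<Rightarrow> nat \<Rightarrow> bool) \<Rightarrow> bool" where
  "strongly_connected n E \<longleftrightarrow> (\<forall>x<n. \<forall>y<n. gdist n E x y \<noteq> \<infinity>)"

definition dist_count :: "nat \<Rightarrow> (nat \<Rightarrow> nat \<Rightarrow> bool) \<Rightarrow> nat \<Rightarrow> nat \<Rightarrow> nat" where
  "dist_count n E i k = card {j. j < n \<and> gdist n E j i = enat k}"

definition lin_centrality :: "nat \<Rightarrow> (nat \<Rightarrow> nat \<Rightarrow> bool) \<Rightarrow> (nat \<Rightarrow> real) \<Rightarrow> nat \<Rightarrow> real" where
  "lin_centrality n E a i = (\<Sum>k<n. real (dist_count n E i k) * a k)"

definition representable :: "nat \<Rightarrow> (nat \<Rightarrow> nat \<Rightarrow> bool) \<Rightarrow> (nat \<Rightarrow> nat) \<Rightarrow> bool" where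
  "representable n E \<pi> \<longleftrightarrow> (\<exists>a::nat \<Rightarrow> real. \<forall>m. Suc m < n \<longrightarrow>
      lin_centrality n E a (\<pi> m) > lin_centrality n E a (\<pi> (Suc m)))"

definition R_ratio :: "nat \<Rightarrow> (nat \<Rightarrow> nat \<Rightarrow> bool) \<Rightarrow> real" where
  "R_ratio n E = real (card {\<pi>. \<pi> permutes {..<n} \<and> representable n E \<pi>}) / fact n"

definition Gn :: "nat \<Rightarrow> nat \<Rightarrow> nat \<Rightarrow> bool" where
  "Gn n i j \<longleftrightarrow> i < n \<and> j < n \<and>
     ((i \<le> n - 2 \<and> j = i + 1) \<or> (1 \<le> i \<and> j = 0) \<or> (i = 0 \<and> j = n - 1))"

end

theory Submission
  imports Defs
begin

definition dg :: "nat \<Rightarrow> nat \<Rightarrow> nat \<Rightarrow> nat" where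
  "dg n j i = (if i = 0 then (if j = 0 then 0 else 1)
     else if i = n - 1 then (if j = n - 1 then 0 else if j = n - 2 \<or> j = 0 then 1 else 2)
     else if j \<le> i then i - j else i + 1)"

lemma gdist_eqI:
  assumes "walk n E x y d" "\<And>k. walk n E x y k \<Longrightarrow> d \<le> k"
  shows "gdist n E x y = enat d"
  unfolding gdist_def using assms by (auto intro!: Least_equality)

lemma walk_mid_back:
  assumes n: "n > 3" and i: "1 \<le> i" "i \<le> n - 2"
    and p: "\<forall>t\<le>k. p t < n" "\<forall>t<k. Gn n (p t) (p (Suc t))" "p k = i"
  shows "m \<le> k \<Longrightarrow> m \<le> i \<Longrightarrow> p (k - m) = i - m"
proof (induction m)
  case 0 then show ?case using p by simp
next
  case (Suc m)
  then have IH: "p (k - m) = i - m" by simp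
  have "Gn n (p (k - Suc m)) (p (Suc (k - Suc m)))" using p Suc.prems by auto
  moreover have "Suc (k - Suc m) = k - m" using Suc.prems by simp
  ultimately have "Gn n (p (k - Suc m)) (i - m)" using IH by simp
  then show ?case using Suc.prems i n unfolding Gn_def by auto
qed

lemma walk_lower:
  assumes n: "n > 3" and jn: "j < n" and iN: "i < n" and w: "walk n (Gn n) j i k"
  shows "dg n j i \<le> k"
proof -
  obtain p where p0: "p 0 = j" and pk: "p k = i" and pl: "\<forall>t\<le>k. p t < n"
    and pe: "\<forall>t<k. Gn n (p t) (p (Suc t))" using w unfolding walk_def by blast
  show ?thesis
  proof (cases "i = 0")
    case True
    then show ?thesis using p0 pk by (cases k) (auto simp: dg_def)
  next
    case i0: False
    show ?thesis
    proof (cases "i = n - 1")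
      case True
      have k0: "k = 0 \<Longrightarrow> j = n - 1" using p0 pk True by simp
      have k1: "k = 1 \<Longrightarrow> j = n - 2 \<or> j = 0" using pe p0 pk True n
        unfolding Gn_def by fastforce
      have "k = 0 \<or> k = 1 \<or> k \<ge> 2" by arith
      then show ?thesis using True i0 k0 k1 n by (auto simp: dg_def)
    next
      case False
      then have i2: "i \<le> n - 2" using iN by simp
      have bk: "\<And>m. m \<le> k \<Longrightarrow> m \<le> i \<Longrightarrow> p (k - m) = i - m"
        using walk_mid_back[OF n _ i2 pl pe pk] i0 by simp
      show ?thesis
      proof (cases "k < i")
        case True
        then have "j = i - k" using bk[of k] p0 by simp
        then show ?thesis using True i0 False by (auto simp: dg_def)
      next
        case kge: False
        then have "p (k - i) = 0" using bk[of i] by simp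
        then have "j \<noteq> 0 \<Longrightarrow> k \<noteq> i" using p0 by auto
        then show ?thesis using kge i0 False by (cases "j \<le> i") (auto simp: dg_def)
      qed
    qed
  qed
qed

lemma walk_upper:
  assumes n: "n > 3" and jn: "j < n" and iN: "i < n"
  shows "walk n (Gn n) j i (dg n j i)"
proof (cases "i = 0")
  case True
  show ?thesis
  proof (cases "j = 0")
    case True then show ?thesis using \<open>i = 0\<close> n unfolding walk_def dg_def
      by (intro exI[of _ "\<lambda>t. 0"]) auto
  next
    case False then show ?thesis using \<open>i = 0\<close> n jn unfolding walk_def dg_def Gn_def
      by (intro exI[of _ "\<lambda>t. if t = 0 then j else 0"]) auto
  qed
next
  case i0: False
  show ?thesis
  proof (cases "i = n - 1")
    case True
    show ?thesis
    proof (cases "j = n - 1")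
      case True then show ?thesis using \<open>i = n - 1\<close> n unfolding walk_def dg_def
        by (intro exI[of _ "\<lambda>t. j"]) auto
    next
      case jn1: False
      show ?thesis
      proof (cases "j = n - 2 \<or> j = 0")
        case True then show ?thesis using \<open>i = n - 1\<close> jn1 n unfolding walk_def dg_def Gn_def
          by (intro exI[of _ "\<lambda>t. if t = 0 then j else n - 1"]) auto
      next
        case False then show ?thesis using \<open>i = n - 1\<close> jn1 jn n unfolding walk_def dg_def Gn_def
          by (intro exI[of _ "\<lambda>t. if t = 0 then j else if t = 1 then 0 else n - 1"]) auto
      qed
    qed
  next
    case False
    then have i2: "i \<le> n - 2" using iN by simp
    show ?thesis
    proof (cases "j \<le> i")
      case True then show ?thesis using i0 False i2 n unfolding walk_def dg_def Gn_def
        by (intro exI[of _ "\<lambda>t. j + t"]) auto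
    next
      case jg: False then show ?thesis using i0 False i2 n jn unfolding walk_def dg_def Gn_def
        by (intro exI[of _ "\<lambda>t. if t = 0 then j else t - 1"]) auto
    qed
  qed
qed

lemma gdist_Gn:
  assumes "n > 3" "j < n" "i < n"
  shows "gdist n (Gn n) j i = enat (dg n j i)"
  using assms by (intro gdist_eqI walk_upper walk_lower)

lemma dg_less: assumes "n > 3" "j < n" "i < n" shows "dg n j i < n"
  using assms unfolding dg_def by auto

lemma lc_sum:
  assumes n: "n > 3" and iN: "i < n"
  shows "lin_centrality n (Gn n) a i = (\<Sum>j<n. a (dg n j i))"
proof -
  have eq: "\<And>k. {j. j < n \<and> gdist n (Gn n) j i = enat k} = {j \<in> {..<n}. dg n j i = k}"
    using gdist_Gn[OF n _ iN] by auto
  have "(\<Sum>j<n. a (dg n j i)) = (\<Sum>k<n. \<Sum>j\<in>{j \<in> {..<n}. dg n j i = k}. a (dg n j i))"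
    by (rule sum.group[symmetric]) (use dg_less[OF n _ iN] in auto)
  also have "\<dots> = (\<Sum>k<n. real (card {j \<in> {..<n}. dg n j i = k}) * a k)"
    by (intro sum.cong refl) simp
  finally show ?thesis unfolding lin_centrality_def dist_count_def eq by simp
qed

lemma F0:
  assumes n: "n > 3"
  shows "(\<Sum>j<n. a (dg n j 0)) = a 0 + real (n - 1) * a 1"
proof -
  obtain m where m: "n = Suc m" using n by (cases n) auto
  have e: "\<And>j. dg n (Suc j) 0 = 1" "dg n 0 0 = 0" by (simp_all add: dg_def)
  have "(\<Sum>j<n. a (dg n j 0)) = a (dg n 0 0) + (\<Sum>j<m. a (dg n (Suc j) 0))"
    unfolding m sum.lessThan_Suc_shift by (simp only: m[symmetric])
  then show ?thesis using m e by simp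
qed

lemma Fmid:
  assumes n: "n > 3" and i: "1 \<le> i" "i \<le> n - 2"
  shows "(\<Sum>j<n. a (dg n j i)) = (\<Sum>k<Suc i. a k) + real (n - 1 - i) * a (Suc i)"
proof -
  have "(\<Sum>j<n. a (dg n j i)) = (\<Sum>j\<in>{0..<n}. a (dg n j i))"
    by (simp only: atLeast0LessThan)
  also have "\<dots> = (\<Sum>j\<in>{0..<Suc i}. a (dg n j i)) + (\<Sum>j\<in>{Suc i..<n}. a (dg n j i))"
    using i n by (intro sum.atLeastLessThan_concat[symmetric]) auto
  also have "(\<Sum>j\<in>{0..<Suc i}. a (dg n j i)) = (\<Sum>j<Suc i. a (Suc i - Suc j))"
    unfolding atLeast0LessThan using i n by (intro sum.cong) (auto simp: dg_def)
  also have "\<dots> = (\<Sum>k<Suc i. a k)" by (rule sum.nat_diff_reindex)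
  also have "(\<Sum>j\<in>{Suc i..<n}. a (dg n j i)) = (\<Sum>j\<in>{Suc i..<n}. a (Suc i))"
    using i n by (intro sum.cong) (auto simp: dg_def)
  also have "\<dots> = real (n - 1 - i) * a (Suc i)" by simp
  finally show ?thesis .
qed

lemma Ftop:
  assumes n: "n > 3"
  shows "(\<Sum>j<n. a (dg n j (n - 1))) = a 0 + 2 * a 1 + real (n - 3) * a 2"
proof -
  define m where "m = n - 3"
  have m: "n = Suc (Suc (Suc m))" "m \<ge> 1" using n unfolding m_def by arith+
  have n1: "n - 1 = Suc (Suc m)" and n2: "n - 2 = Suc m" and n3: "n - 3 = m" using m by auto
  have e1: "dg n (Suc (Suc m)) (n - 1) = 0" unfolding dg_def using n1 n2 by simp
  have e2: "dg n (Suc m) (n - 1) = 1" unfolding dg_def using n1 n2 by simp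
  have e3: "dg n 0 (n - 1) = 1" unfolding dg_def using n1 n2 by simp
  have e4: "\<And>j. j < m \<Longrightarrow> dg n (Suc j) (n - 1) = 2" unfolding dg_def using n1 n2 by simp
  have s: "{..<n} = insert (Suc (Suc m)) (insert (Suc m) {..<Suc m})" using m(1) by auto
  have "(\<Sum>j<n. a (dg n j (n - 1))) = a (dg n (Suc (Suc m)) (n - 1)) + (a (dg n (Suc m) (n - 1)) + (\<Sum>j<Suc m. a (dg n j (n - 1))))"
    unfolding s by (subst sum.insert; simp)+
  also have "(\<Sum>j<Suc m. a (dg n j (n - 1))) = a (dg n 0 (n - 1)) + (\<Sum>j<m. a (dg n (Suc j) (n - 1)))"
    by (rule sum.lessThan_Suc_shift)
  also have "(\<Sum>j<m. a (dg n (Suc j) (n - 1))) = (\<Sum>j<m. a 2)"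
    using e4 by (intro sum.cong) auto
  finally show ?thesis using n3 e1 e2 e3 by simp
qed

definition FF :: "nat \<Rightarrow> (nat \<Rightarrow> real) \<Rightarrow> nat \<Rightarrow> real" where
  "FF n a i = (\<Sum>j<n. a (dg n j i))"

lemma FF_rel:
  assumes n: "n > 3"
  shows "FF n a 0 - FF n a 1 = real (n - 2) * (a 1 - a 2)"
    and "FF n a (n - 1) - FF n a 1 = a 1 - a 2"
proof -
  have f1: "FF n a 1 = a 0 + a 1 + real (n - 2) * a 2"
    unfolding FF_def using Fmid[OF n, of 1 a] n by (simp add: numeral_2_eq_2)
  have r: "real (n - 1) = real (n - 2) + 1" "real (n - 3) = real (n - 2) - 1" using n by auto
  show "FF n a 0 - FF n a 1 = real (n - 2) * (a 1 - a 2)"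
    unfolding FF_def F0[OF n] using f1 r unfolding FF_def by (simp add: algebra_simps)
  show "FF n a (n - 1) - FF n a 1 = a 1 - a 2"
    unfolding FF_def Ftop[OF n] using f1 r unfolding FF_def by (simp add: algebra_simps)
qed

definition aw :: "nat \<Rightarrow> (nat \<Rightarrow> real) \<Rightarrow> nat \<Rightarrow> real" where
  "aw n w k = (if k = 0 then w 0 else (\<Sum>t\<in>{1..<k}. (w t - w (t - 1)) / real (n - 1 - t)))"

lemma aw_1: "aw n w 1 = 0" by (simp add: aw_def)

lemma aw_step: "aw n w (Suc (Suc i)) = aw n w (Suc i) + (w (Suc i) - w i) / real (n - 2 - i)"
proof -
  have "n - 1 - Suc i = n - 2 - i" by simp
  then show ?thesis by (simp add: aw_def)
qed

lemma G_aw: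
  assumes n: "n > 3"
  shows "i \<le> n - 2 \<Longrightarrow> (\<Sum>k<Suc i. aw n w k) + real (n - 1 - i) * aw n w (Suc i) = w i"
proof (induction i)
  case 0 then show ?case by (simp add: aw_1 aw_def)
next
  case (Suc i)
  let ?a = "aw n w"
  have IH: "(\<Sum>k<Suc i. ?a k) + real (n - 1 - i) * ?a (Suc i) = w i" using Suc by simp
  have pos: "real (n - 2 - i) > 0" using Suc.prems by simp
  have r: "real (n - 1 - i) = real (n - 2 - i) + 1" using Suc.prems by simp
  have r2: "n - 1 - Suc i = n - 2 - i" by simp
  have "(\<Sum>k<Suc (Suc i). ?a k) + real (n - 1 - Suc i) * ?a (Suc (Suc i))
      = (\<Sum>k<Suc i. ?a k) + ?a (Suc i) + real (n - 2 - i) * (?a (Suc i) + (w (Suc i) - w i) / real (n - 2 - i))"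
    unfolding r2 aw_step by simp
  also have "\<dots> = (\<Sum>k<Suc i. ?a k) + real (n - 1 - i) * ?a (Suc i) + (w (Suc i) - w i)"
    using pos unfolding r by (simp add: field_simps)
  also have "\<dots> = w (Suc i)" using IH by simp
  finally show ?case .
qed

lemma FF_aw:
  assumes n: "n > 3" and i: "i \<le> n - 2"
  shows "FF n (aw n w) i = w i"
proof (cases "i = 0")
  case True
  have "FF n (aw n w) 0 = w 0" using G_aw[OF n, of 0 w] unfolding FF_def F0[OF n] by simp
  then show ?thesis using True by simp
next
  case False
  then show ?thesis using G_aw[OF n i, of w] Fmid[OF n _ i, of "aw n w"] unfolding FF_def by simp
qed

lemma FF_top:
  assumes n: "n > 3"
  shows "FF n a (n - 1) = FF n a 1 + (FF n a 0 - FF n a 1) / real (n - 2)"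
proof -
  have pos: "real (n - 2) \<noteq> 0" using n by simp
  have "(FF n a 0 - FF n a 1) / real (n - 2) = a 1 - a 2"
    unfolding FF_rel(1)[OF n] using pos by simp
  then show ?thesis using FF_rel(2)[OF n, of a] by simp
qed

definition btw :: "nat \<Rightarrow> (nat \<Rightarrow> nat) \<Rightarrow> nat \<Rightarrow> nat \<Rightarrow> nat \<Rightarrow> bool" where
  "btw n \<pi> x y z \<longleftrightarrow> (\<exists>i j k. i < j \<and> j < k \<and> k < n \<and> \<pi> j = y \<and>
      ((\<pi> i = x \<and> \<pi> k = z) \<or> (\<pi> i = z \<and> \<pi> k = x)))"

lemma btw_sym: "btw n \<pi> x y z = btw n \<pi> z y x"
  unfolding btw_def by blast

lemma btw_comp: "btw n \<pi> x y z \<Longrightarrow> btw n (f \<circ> \<pi>) (f x) (f y) (f z)"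
  unfolding btw_def by fastforce

lemma pos_exists:
  assumes "\<pi> permutes {..<n}" "x < n"
  shows "inv \<pi> x < n" "\<pi> (inv \<pi> x) = x"
  using assms permutes_inverses(1)[OF assms(1)] permutes_in_image[OF permutes_inv[OF assms(1)]]
  by auto

lemma btw_pos:
  assumes p: "\<pi> permutes {..<n}" and b: "btw n \<pi> x y z"
    and abc: "a < n" "b < n" "c < n" "\<pi> a = x" "\<pi> b = y" "\<pi> c = z"
  shows "(a < b \<and> b < c) \<or> (c < b \<and> b < a)"
proof -
  have inj: "inj_on \<pi> {..<n}" using permutes_inj_on[OF p] .
  obtain i j k where ijk: "i < j" "j < k" "k < n" "\<pi> j = y"
      "(\<pi> i = x \<and> \<pi> k = z) \<or> (\<pi> i = z \<and> \<pi> k = x)"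
    using b unfolding btw_def by blast
  have jb: "j = b" using inj_onD[OF inj, of j b] ijk abc by simp
  from ijk(5) show ?thesis
  proof
    assume h: "\<pi> i = x \<and> \<pi> k = z"
    then have "i = a" "k = c" using inj_onD[OF inj, of i a] inj_onD[OF inj, of k c] ijk abc by simp_all
    then show ?thesis using ijk jb by simp
  next
    assume h: "\<pi> i = z \<and> \<pi> k = x"
    then have "i = c" "k = a" using inj_onD[OF inj, of i c] inj_onD[OF inj, of k a] ijk abc by simp_all
    then show ?thesis using ijk jb by simp
  qed
qed

lemma chain_dec:
  assumes "\<forall>m. Suc m < n \<longrightarrow> g (Suc m) < (g m :: real)"
  shows "i < j \<Longrightarrow> j < n \<Longrightarrow> g j < g i"
proof (induction j)
  case 0 then show ?case by simp
next
  case (Suc j)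
  show ?case
  proof (cases "i = j")
    case True then show ?thesis using assms Suc.prems by simp
  next
    case False
    then have "g j < g i" using Suc by simp
    moreover have "g (Suc j) < g j" using assms Suc.prems by simp
    ultimately show ?thesis by simp
  qed
qed

lemma V_exists:
  fixes \<alpha> \<beta> :: real
  assumes "q < p" "p < r" "\<alpha> > 0" "\<beta> > 0" "\<alpha> + \<beta> = 1"
  shows "\<exists>V::nat \<Rightarrow> real. (\<forall>x y. x < y \<longrightarrow> V y < V x) \<and> V p = \<alpha> * V q + \<beta> * V r"
proof -
  define c where "c = \<alpha> * (real p - real q) / (\<beta> * (real r - real p))"
  have c: "c > 0" using assms unfolding c_def by simp
  define V where "V m = (if m \<le> p then - real m else - real p - c * (real m - real p))" for m
  have dec: "\<forall>x y. x < y \<longrightarrow> V y < V x"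
  proof (intro allI impI)
    fix x y :: nat assume xy: "x < y"
    show "V y < V x"
    proof (cases "y \<le> p")
      case True then show ?thesis using xy unfolding V_def by simp
    next
      case yp: False
      have pos: "c * (real y - real p) > 0" using c yp by simp
      show ?thesis
      proof (cases "x \<le> p")
        case True then show ?thesis using yp pos unfolding V_def by simp
      next
        case False
        have "c * (real x - real p) < c * (real y - real p)" using c xy by simp
        then show ?thesis using False yp unfolding V_def by simp
      qed
    qed
  qed
  have key: "\<beta> * (c * (real r - real p)) = \<alpha> * (real p - real q)"
    unfolding c_def using assms by simp
  have Vq: "V q = - real q" and Vp: "V p = - real p" and Vr: "V r = - real p - c * (real r - real p)"
    using assms unfolding V_def by auto
  have "\<alpha> * V q + \<beta> * V r = - (\<alpha> * real q) - \<beta> * real p - \<beta> * (c * (real r - real p))"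
    unfolding Vq Vr by (simp add: algebra_simps)
  also have "\<dots> = - (\<alpha> * real q) - \<beta> * real p - \<alpha> * (real p - real q)" using key by simp
  also have "\<dots> = - (\<alpha> + \<beta>) * real p" by (simp add: algebra_simps)
  also have "\<dots> = V p" using assms Vp by simp
  finally show ?thesis using dec by metis
qed

lemma rep_iff:
  assumes n: "n > 3" and p: "\<pi> permutes {..<n}"
  shows "representable n (Gn n) \<pi> \<longleftrightarrow> btw n \<pi> 0 (n - 1) 1"
proof -
  define p0 where "p0 = inv \<pi> 0"
  define p1 where "p1 = inv \<pi> 1"
  define pt where "pt = inv \<pi> (n - 1)"
  have P0: "p0 < n" "\<pi> p0 = 0" using pos_exists[OF p, of 0] n unfolding p0_def by auto
  have P1: "p1 < n" "\<pi> p1 = 1" using pos_exists[OF p, of 1] n unfolding p1_def by auto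
  have Pt: "pt < n" "\<pi> pt = n - 1" using pos_exists[OF p, of "n - 1"] n unfolding pt_def by auto
  have dist: "p0 \<noteq> p1" "p0 \<noteq> pt" "p1 \<noteq> pt" using P0 P1 Pt n by auto
  have piN: "\<And>m. m < n \<Longrightarrow> \<pi> m < n" using permutes_in_image[OF p] by simp
  show ?thesis
  proof
    assume "representable n (Gn n) \<pi>"
    then obtain a where a: "\<forall>m. Suc m < n \<longrightarrow>
        lin_centrality n (Gn n) a (\<pi> m) > lin_centrality n (Gn n) a (\<pi> (Suc m))"
      unfolding representable_def by blast
    define g where "g m = FF n a (\<pi> m)" for m
    have lcF: "\<And>m. m < n \<Longrightarrow> lin_centrality n (Gn n) a (\<pi> m) = g m"
      using lc_sum[OF n] piN unfolding g_def FF_def by simp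
    have gdec: "\<forall>m. Suc m < n \<longrightarrow> g (Suc m) < g m"
    proof (intro allI impI)
      fix m assume "Suc m < n"
      moreover have "lin_centrality n (Gn n) a (\<pi> (Suc m)) < lin_centrality n (Gn n) a (\<pi> m)"
        using a \<open>Suc m < n\<close> by blast
      ultimately show "g (Suc m) < g m" using lcF[of m] lcF[of "Suc m"] by simp
    qed
    have ord: "\<And>x y. x < n \<Longrightarrow> y < n \<Longrightarrow> g y < g x \<Longrightarrow> x < y"
    proof -
      fix x y assume xy: "x < n" "y < n" "g y < g x"
      show "x < y"
      proof (rule ccontr)
        assume "\<not> x < y"
        then have "y < x \<or> y = x" by auto
        then show False using chain_dec[OF gdec, of y x] xy by auto
      qed
    qed
    have g0: "g p0 = FF n a 0" and g1: "g p1 = FF n a 1" and gt: "g pt = FF n a (n - 1)"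
      unfolding g_def using P0 P1 Pt by simp_all
    note r1 = FF_rel(1)[OF n, of a] and r2 = FF_rel(2)[OF n, of a]
    have n2: "real (n - 2) - 1 > 0" using n by simp
    have ld: "(real (n - 2) - 1) * (a 1 - a 2) = real (n - 2) * (a 1 - a 2) - (a 1 - a 2)"
      by (simp add: left_diff_distrib)
    have e: "FF n a 0 - FF n a (n - 1) = (real (n - 2) - 1) * (a 1 - a 2)"
      using r1 r2 ld by linarith
    consider "a 1 > a 2" | "a 1 < a 2" | "a 1 = a 2" by linarith
    then show "btw n \<pi> 0 (n - 1) 1"
    proof cases
      case 1
      have m: "0 < (real (n - 2) - 1) * (a 1 - a 2)" using 1 n2 by simp
      have "g p1 < g pt" "g pt < g p0" using r2 e m 1 unfolding g0 g1 gt by linarith+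
      then have "pt < p1" "p0 < pt" using ord P0 P1 Pt by auto
      then show ?thesis unfolding btw_def using P0 P1 Pt by blast
    next
      case 2
      have m: "(real (n - 2) - 1) * (a 1 - a 2) < 0" using 2 n2 by (simp add: mult_pos_neg)
      have "g p0 < g pt" "g pt < g p1" using r2 e m 2 unfolding g0 g1 gt by linarith+
      then have "pt < p0" "p1 < pt" using ord P0 P1 Pt by auto
      then show ?thesis unfolding btw_def using P0 P1 Pt by blast
    next
      case 3
      have "g p0 = g p1" using r1 3 unfolding g0 g1 by simp
      moreover have "p0 < p1 \<or> p1 < p0" using dist by linarith
      ultimately show ?thesis using chain_dec[OF gdec, of p0 p1] chain_dec[OF gdec, of p1 p0] P0 P1
        by auto
    qed
  next
    assume b: "btw n \<pi> 0 (n - 1) 1"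
    have o: "(p0 < pt \<and> pt < p1) \<or> (p1 < pt \<and> pt < p0)"
      using btw_pos[OF p b P0(1) Pt(1) P1(1) P0(2) Pt(2) P1(2)] .
    define t where "t = 1 / real (n - 2)"
    have t: "0 < t" "t < 1" using n unfolding t_def by auto
    have tdiv: "\<And>x. x / real (n - 2) = t * x" unfolding t_def by simp
    obtain V :: "nat \<Rightarrow> real" where dec: "\<forall>x y. x < y \<longrightarrow> V y < V x"
      and Vt: "V pt = V p1 + (V p0 - V p1) / real (n - 2)"
    proof -
      from o show ?thesis
      proof
        assume h: "p0 < pt \<and> pt < p1"
        obtain V :: "nat \<Rightarrow> real" where "\<forall>x y. x < y \<longrightarrow> V y < V x"
          "V pt = t * V p0 + (1 - t) * V p1"
          using V_exists[of p0 pt p1 t "1 - t"] h t by auto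
        then show ?thesis using that[of V] unfolding tdiv by (simp add: algebra_simps)
      next
        assume h: "p1 < pt \<and> pt < p0"
        obtain V :: "nat \<Rightarrow> real" where "\<forall>x y. x < y \<longrightarrow> V y < V x"
          "V pt = (1 - t) * V p1 + t * V p0"
          using V_exists[of p1 pt p0 "1 - t" t] h t by auto
        then show ?thesis using that[of V] unfolding tdiv by (simp add: algebra_simps)
      qed
    qed
    define w where "w x = V (inv \<pi> x)" for x
    define a where "a = aw n w"
    have FV: "FF n a (\<pi> m) = V m" if m: "m < n" for m
    proof (cases "\<pi> m \<le> n - 2")
      case True
      then have "FF n a (\<pi> m) = w (\<pi> m)" unfolding a_def using FF_aw[OF n] by simp
      then show ?thesis unfolding w_def using permutes_inverses(2)[OF p] by simp
    next
      case False
      then have pm: "\<pi> m = n - 1" using piN[OF m] by simp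
      then have mpt: "m = pt" unfolding pt_def using permutes_inverses(2)[OF p, of m] by simp
      have "FF n a 0 = V p0" "FF n a 1 = V p1" using FF_aw[OF n, of 0 w] FF_aw[OF n, of 1 w] n
        unfolding a_def w_def p0_def p1_def by auto
      then show ?thesis using FF_top[OF n, of a] pm mpt Vt by simp
    qed
    show "representable n (Gn n) \<pi>"
      unfolding representable_def
    proof (intro exI allI impI)
      fix m assume m: "Suc m < n"
      have "lin_centrality n (Gn n) a (\<pi> m) = V m"
        using lc_sum[OF n piN, of m a] FV[of m] m unfolding FF_def by simp
      moreover have "lin_centrality n (Gn n) a (\<pi> (Suc m)) = V (Suc m)"
        using lc_sum[OF n piN, of "Suc m" a] FV[of "Suc m"] m unfolding FF_def by simp
      ultimately show "lin_centrality n (Gn n) a (\<pi> (Suc m)) < lin_centrality n (Gn n) a (\<pi> m)"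
        using dec by simp
    qed
  qed
qed

lemma btw_cover:
  assumes n: "n > 3" and p: "\<pi> permutes {..<n}"
  shows "btw n \<pi> 1 0 (n - 1) \<or> btw n \<pi> 0 1 (n - 1) \<or> btw n \<pi> 0 (n - 1) 1"
proof -
  define p0 where "p0 = inv \<pi> 0"
  define p1 where "p1 = inv \<pi> 1"
  define pt where "pt = inv \<pi> (n - 1)"
  have P0: "p0 < n" "\<pi> p0 = 0" using pos_exists[OF p, of 0] n unfolding p0_def by auto
  have P1: "p1 < n" "\<pi> p1 = 1" using pos_exists[OF p, of 1] n unfolding p1_def by auto
  have Pt: "pt < n" "\<pi> pt = n - 1" using pos_exists[OF p, of "n - 1"] n unfolding pt_def by auto
  have dist: "p0 \<noteq> p1" "p0 \<noteq> pt" "p1 \<noteq> pt" using P0 P1 Pt n by auto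
  consider "p0 < pt \<and> pt < p1 \<or> p1 < pt \<and> pt < p0"
    | "p1 < p0 \<and> p0 < pt \<or> pt < p0 \<and> p0 < p1"
    | "p0 < p1 \<and> p1 < pt \<or> pt < p1 \<and> p1 < p0"
    using dist by linarith
  then show ?thesis
  proof cases
    case 1 then show ?thesis unfolding btw_def using P0 P1 Pt by blast
  next
    case 2 then show ?thesis unfolding btw_def using P0 P1 Pt by blast
  next
    case 3 then show ?thesis unfolding btw_def using P0 P1 Pt by blast
  qed
qed

lemma btw_disj:
  assumes n: "n > 3" and p: "\<pi> permutes {..<n}"
  shows "\<not> (btw n \<pi> 1 0 (n - 1) \<and> btw n \<pi> 0 1 (n - 1))"
    "\<not> (btw n \<pi> 1 0 (n - 1) \<and> btw n \<pi> 0 (n - 1) 1)"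
    "\<not> (btw n \<pi> 0 1 (n - 1) \<and> btw n \<pi> 0 (n - 1) 1)"
proof -
  define p0 where "p0 = inv \<pi> 0"
  define p1 where "p1 = inv \<pi> 1"
  define pt where "pt = inv \<pi> (n - 1)"
  have P0: "p0 < n" "\<pi> p0 = 0" using pos_exists[OF p, of 0] n unfolding p0_def by auto
  have P1: "p1 < n" "\<pi> p1 = 1" using pos_exists[OF p, of 1] n unfolding p1_def by auto
  have Pt: "pt < n" "\<pi> pt = n - 1" using pos_exists[OF p, of "n - 1"] n unfolding pt_def by auto
  have A: "btw n \<pi> 1 0 (n - 1) \<Longrightarrow> (p1 < p0 \<and> p0 < pt) \<or> (pt < p0 \<and> p0 < p1)"
    using btw_pos[OF p _ P1(1) P0(1) Pt(1) P1(2) P0(2) Pt(2)] by simp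
  have B: "btw n \<pi> 0 1 (n - 1) \<Longrightarrow> (p0 < p1 \<and> p1 < pt) \<or> (pt < p1 \<and> p1 < p0)"
    using btw_pos[OF p _ P0(1) P1(1) Pt(1) P0(2) P1(2) Pt(2)] by simp
  have C: "btw n \<pi> 0 (n - 1) 1 \<Longrightarrow> (p0 < pt \<and> pt < p1) \<or> (p1 < pt \<and> pt < p0)"
    using btw_pos[OF p _ P0(1) Pt(1) P1(1) P0(2) Pt(2) P1(2)] by simp
  show "\<not> (btw n \<pi> 1 0 (n - 1) \<and> btw n \<pi> 0 1 (n - 1))" using A B by linarith
  show "\<not> (btw n \<pi> 1 0 (n - 1) \<and> btw n \<pi> 0 (n - 1) 1)" using A C by linarith
  show "\<not> (btw n \<pi> 0 1 (n - 1) \<and> btw n \<pi> 0 (n - 1) 1)" using B C by linarith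
qed

lemma card_C:
  assumes n: "n > 3"
  shows "3 * card {\<pi>. \<pi> permutes {..<n} \<and> btw n \<pi> 0 (n - 1) 1} = fact n"
proof -
  define P where "P = {\<pi>. \<pi> permutes {..<n}}"
  define A where "A = {\<pi>. \<pi> permutes {..<n} \<and> btw n \<pi> 1 0 (n - 1)}"
  define B where "B = {\<pi>. \<pi> permutes {..<n} \<and> btw n \<pi> 0 1 (n - 1)}"
  define C where "C = {\<pi>. \<pi> permutes {..<n} \<and> btw n \<pi> 0 (n - 1) 1}"
  define \<sigma> where "\<sigma> = transpose (0::nat) 1 \<circ> transpose 1 (n - 1)"
  define \<tau> where "\<tau> = transpose (1::nat) (n - 1) \<circ> transpose 0 1"
  have n01: "(0::nat) \<noteq> 1" "(0::nat) \<noteq> n - 1" "(1::nat) \<noteq> n - 1" using n by auto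
  have sv: "\<sigma> 0 = 1" "\<sigma> 1 = n - 1" "\<sigma> (n - 1) = 0" unfolding \<sigma>_def using n01 by (auto simp: transpose_def)
  have tv: "\<tau> 0 = n - 1" "\<tau> 1 = 0" "\<tau> (n - 1) = 1" unfolding \<tau>_def using n01 by (auto simp: transpose_def)
  have sp: "\<sigma> permutes {..<n}" unfolding \<sigma>_def using n
    by (intro permutes_compose permutes_swap_id) auto
  have tp: "\<tau> permutes {..<n}" unfolding \<tau>_def using n
    by (intro permutes_compose permutes_swap_id) auto
  have ts: "\<tau> \<circ> \<sigma> = id" unfolding \<tau>_def \<sigma>_def by (auto simp: fun_eq_iff transpose_def)
  have st: "\<sigma> \<circ> \<tau> = id" unfolding \<tau>_def \<sigma>_def by (auto simp: fun_eq_iff transpose_def)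
  have ts': "\<And>\<pi>. \<tau> \<circ> (\<sigma> \<circ> \<pi>) = \<pi>" using ts by (simp add: o_assoc)
  have st': "\<And>\<pi>. \<sigma> \<circ> (\<tau> \<circ> \<pi>) = \<pi>" using st by (simp add: o_assoc)
  have CA: "bij_betw (\<lambda>\<pi>. \<sigma> \<circ> \<pi>) C A"
  proof (rule bij_betw_byWitness[where f' = "\<lambda>\<pi>. \<tau> \<circ> \<pi>"])
    show "\<forall>a\<in>C. \<tau> \<circ> (\<sigma> \<circ> a) = a" using ts' by blast
    show "\<forall>a\<in>A. \<sigma> \<circ> (\<tau> \<circ> a) = a" using st' by blast
    show "(\<circ>) \<sigma> ` C \<subseteq> A" unfolding C_def A_def
      using btw_comp[of n _ 0 "n - 1" 1 \<sigma>] sv permutes_compose[OF _ sp] by auto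
    show "(\<circ>) \<tau> ` A \<subseteq> C" unfolding C_def A_def
      using btw_comp[of n _ 1 0 "n - 1" \<tau>] tv permutes_compose[OF _ tp] by auto
  qed
  have CB: "bij_betw (\<lambda>\<pi>. \<tau> \<circ> \<pi>) C B"
  proof (rule bij_betw_byWitness[where f' = "\<lambda>\<pi>. \<sigma> \<circ> \<pi>"])
    show "\<forall>a\<in>C. \<sigma> \<circ> (\<tau> \<circ> a) = a" using st' by blast
    show "\<forall>a\<in>B. \<tau> \<circ> (\<sigma> \<circ> a) = a" using ts' by blast
    show "(\<circ>) \<tau> ` C \<subseteq> B" unfolding C_def B_def
      using btw_comp[of n _ 0 "n - 1" 1 \<tau>] tv permutes_compose[OF _ tp] btw_sym by auto
    show "(\<circ>) \<sigma> ` B \<subseteq> C" unfolding C_def B_def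
      using btw_comp[of n _ 0 1 "n - 1" \<sigma>] sv permutes_compose[OF _ sp] btw_sym by auto
  qed
  have cA: "card A = card C" using bij_betw_same_card[OF CA] by simp
  have cB: "card B = card C" using bij_betw_same_card[OF CB] by simp
  have fP: "finite P" unfolding P_def by (rule finite_permutations) simp
  have PU: "P = A \<union> B \<union> C" unfolding P_def A_def B_def C_def using btw_cover[OF n] by auto
  have sub: "A \<subseteq> P" "B \<subseteq> P" "C \<subseteq> P" unfolding P_def A_def B_def C_def by auto
  have fin: "finite A" "finite B" "finite C" using sub fP finite_subset by blast+
  have d1: "A \<inter> B = {}" unfolding A_def B_def using btw_disj(1)[OF n] by auto
  have d2: "(A \<union> B) \<inter> C = {}" unfolding A_def B_def C_def using btw_disj(2,3)[OF n] by auto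
  have "card P = card A + card B + card C"
    unfolding PU using fin d1 d2 by (simp add: card_Un_disjoint)
  moreover have "card P = fact n" unfolding P_def by (rule card_permutations) simp_all
  ultimately show ?thesis unfolding C_def[symmetric] using cA cB by simp
qed

theorem corollary5:
  fixes n :: nat
  assumes "n > 3"
  shows "strongly_connected n (Gn n) \<and> R_ratio n (Gn n) = 1 / 3"
proof
  show "strongly_connected n (Gn n)"
    unfolding strongly_connected_def using gdist_Gn[OF assms] by simp
  have S: "{\<pi>. \<pi> permutes {..<n} \<and> representable n (Gn n) \<pi>}
      = {\<pi>. \<pi> permutes {..<n} \<and> btw n \<pi> 0 (n - 1) 1}"
    using rep_iff[OF assms] by auto
  have c: "real (3 * card {\<pi>. \<pi> permutes {..<n} \<and> btw n \<pi> 0 (n - 1) 1}) = fact n"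
    using card_C[OF assms] by (simp only: of_nat_fact)
  have fpos: "(fact n :: real) > 0" by simp
  show "R_ratio n (Gn n) = 1 / 3"
    unfolding R_ratio_def S using c fpos by (simp add: field_simps)
qed

end
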